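(* On the two-letter alphabet $\{\mathtt A,\mathtt B\}$, there exists a $1$-regular word of length $n\ge 1$ if and only if $n=4k$ for some positive integer $k$. Moreover, in that case every $1$-regular word of length $4k$ over $\{\mathtt A,\mathtt B\}$ can be obtained from the word $\mathtt A^k\mathtt B^{2k}\mathtt A^k$ by a finite sequence of operations, each of which replaces a word of the form $x\,\mathtt{AB}\,y\,\mathtt{BA}\,z$ by $x\,\mathtt{BA}\,y\,\mathtt{AB}\,z$ (for some words $x,y,z$, possibly empty), with every intermediate word being $1$-regular.
   Context: For a word $u=u_1\cdots u_m$ over an alphabet $\mathcal A$ with $b$ letters and an integer $r\ge -1$, $u$ is $r$-regular if for every $k=0,1,\dots,r$ the sum $\sum_{1\le t\le m,\ u_t=c} t^k$ is the same for all letters $c\in\mathcal A$ (a letter not occurring contributes $0$). Here $\mathcal A=\{\mathtt A,\mathtt B\}$, and $\mathtt A^k$ denotes $k$ consecutive copies of $\mathtt A$. *)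

theory Defs
  imports Main
begin

datatype letter = A | B

definition pos_power_sum :: "nat \<Rightarrow> letter \<Rightarrow> letter list \<Rightarrow> nat" where
  "pos_power_sum k c u = (\<Sum>t\<in>{1..length u}. if u ! (t - 1) = c then t ^ k else 0)"

definition regular :: "int \<Rightarrow> letter list \<Rightarrow> bool" where
  "regular r u \<longleftrightarrow> (\<forall>k::nat. int k \<le> r \<longrightarrow>
      (\<forall>c d. pos_power_sum k c u = pos_power_sum k d u))"

definition swap_step :: "letter list \<Rightarrow> letter list \<Rightarrow> bool" where
  "swap_step u v \<longleftrightarrow> (\<exists>x y z. u = x @ [A, B] @ y @ [B, A] @ z \<and>
                                 v = x @ [B, A] @ y @ [A, B] @ z)"

definition regular_swap_step :: "letter list \<Rightarrow> letter list \<Rightarrow> bool" where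
  "regular_swap_step u v \<longleftrightarrow> swap_step u v \<and> regular 1 u \<and> regular 1 v"

end

theory Submission imports Defs begin

abbreviation pp where "pp \<equiv> pos_power_sum"

lemma pp_Nil[simp]: "pp k c [] = 0"
  by (simp add: pos_power_sum_def)

lemma pp_snoc: "pp k c (xs @ [d]) = pp k c xs + (if d = c then (Suc (length xs))^k else 0)"
proof -
  have s: "{1..Suc (length xs)} = insert (Suc (length xs)) {1..length xs}" by auto
  have "(\<Sum>t\<in>{1..length xs}. if (xs @ [d]) ! (t - 1) = c then t ^ k else 0)
      = (\<Sum>t\<in>{1..length xs}. if xs ! (t - 1) = c then t ^ k else 0)"
    by (rule sum.cong) (auto simp: nth_append)
  then show ?thesis unfolding pos_power_sum_def using s by (simp add: s)
qed

lemma pp0_app: "pp 0 c (xs@ys) = pp 0 c xs + pp 0 c ys"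
proof (induction ys rule: rev_induct)
  case (snoc d ys) then show ?case
    by (simp only: append_assoc[symmetric] pp_snoc) simp
qed simp

lemma pp1_app: "pp 1 c (xs@ys) = pp 1 c xs + pp 1 c ys + length xs * pp 0 c ys"
proof (induction ys rule: rev_induct)
  case (snoc d ys) then show ?case
    by (simp only: append_assoc[symmetric] pp_snoc) (simp add: algebra_simps)
qed simp

lemma pp1_app': "pp (Suc 0) c (xs@ys) = pp (Suc 0) c xs + pp (Suc 0) c ys + length xs * pp 0 c ys"
  using pp1_app by simp

lemma pp2_app: "pp 2 c (xs@ys) = pp 2 c xs + pp 2 c ys + 2 * length xs * pp 1 c ys + (length xs)^2 * pp 0 c ys"
proof (induction ys rule: rev_induct)
  case (snoc d ys) then show ?case
    by (simp only: append_assoc[symmetric] pp_snoc) (simp add: algebra_simps power2_eq_square)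
qed simp

lemma pp_single: "pp k c [d] = (if d = c then 1 else 0)"
  using pp_snoc[of k c "[]" d] by simp

lemma pp0_Cons[simp]: "pp 0 c (d # xs) = (if d = c then 1 else 0) + pp 0 c xs"
  using pp0_app[of c "[d]" xs] by (simp add: pp_single)
lemma pp1_Cons[simp]: "pp 1 c (d # xs) = (if d = c then 1 else 0) + pp 1 c xs + pp 0 c xs"
  using pp1_app[of c "[d]" xs] by (simp add: pp_single)
lemma pp1_Cons'[simp]: "pp (Suc 0) c (d # xs) = (if d = c then 1 else 0) + pp (Suc 0) c xs + pp 0 c xs"
  using pp1_Cons by simp
lemma pp2_Cons[simp]: "pp 2 c (d # xs) = (if d = c then 1 else 0) + pp 2 c xs + 2 * pp 1 c xs + pp 0 c xs"
  using pp2_app[of c "[d]" xs] by (simp add: pp_single)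

lemma pp0_rep[simp]: "pp 0 c (replicate m d) = (if d = c then m else 0)"
  by (induction m) auto
lemma pp1_rep_other[simp]: "d \<noteq> c \<Longrightarrow> pp 1 c (replicate m d) = 0"
  by (induction m) (auto simp del: pp1_Cons)
lemma pp1_rep_other'[simp]: "d \<noteq> c \<Longrightarrow> pp (Suc 0) c (replicate m d) = 0"
  using pp1_rep_other by simp
lemma pp1_rep_same: "2 * pp 1 c (replicate m c) = m * (m+1)"
  by (induction m) (auto simp del: pp1_Cons)

lemma reg_iff: "regular 1 u \<longleftrightarrow> pp 0 A u = pp 0 B u \<and> pp 1 A u = pp 1 B u"
proof
  assume "regular 1 u"
  then have h: "\<And>k c d. int k \<le> 1 \<Longrightarrow> pp k c u = pp k d u" unfolding regular_def by blast
  show "pp 0 A u = pp 0 B u \<and> pp 1 A u = pp 1 B u" using h[of 0 A B] h[of 1 A B] by simp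
next
  assume h: "pp 0 A u = pp 0 B u \<and> pp 1 A u = pp 1 B u"
  show "regular 1 u" unfolding regular_def
  proof (intro allI impI)
    fix k :: nat and c d assume "int k \<le> 1"
    then have "k = 0 \<or> k = 1" by auto
    then show "pp k c u = pp k d u" using h by (cases c; cases d) auto
  qed
qed

lemma repl0: "pp k c (p @ d # q) + (if d' = c then Suc (length p) ^ k else 0)
   = pp k c (p @ d' # q) + (if d = c then Suc (length p) ^ k else 0)"
proof (induction q rule: rev_induct)
  case Nil then show ?case using pp_snoc[of k c p d] pp_snoc[of k c p d'] by simp
next
  case (snoc e q)
  define T where "T = (if e = c then Suc (length p + Suc (length q)) ^ k else 0)"
  have "pp k c (p @ d # q @ [e]) = pp k c (p @ d # q) + T"
    using pp_snoc[of k c "p @ d # q" e] unfolding T_def by simp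
  moreover have "pp k c (p @ d' # q @ [e]) = pp k c (p @ d' # q) + T"
    using pp_snoc[of k c "p @ d' # q" e] unfolding T_def by simp
  ultimately show ?case using snoc.IH by linarith
qed

lemma repl: "length p = n \<Longrightarrow> pp k c (p @ d # q) + (if d' = c then Suc n ^ k else 0)
   = pp k c (p @ d' # q) + (if d = c then Suc n ^ k else 0)"
  using repl0 by blast

lemma chain:
  fixes x y z :: "letter list" and k c
  defines "L \<equiv> length x" and "M \<equiv> length y"
  shows "pp k c (x@[A,B]@y@[B,A]@z) + ((if B = c then (Suc L)^k else 0) + (if A = c then (Suc (Suc L))^k else 0)
        + (if A = c then (Suc (L+M+2))^k else 0) + (if B = c then (Suc (L+M+3))^k else 0))
     = pp k c (x@[B,A]@y@[A,B]@z) + ((if A = c then (Suc L)^k else 0) + (if B = c then (Suc (Suc L))^k else 0)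
        + (if B = c then (Suc (L+M+2))^k else 0) + (if A = c then (Suc (L+M+3))^k else 0))"
proof -
  have 1: "pp k c (x @ A # (B # y @ B # A # z)) + (if B = c then (Suc L)^k else 0)
      = pp k c (x @ B # (B # y @ B # A # z)) + (if A = c then (Suc L)^k else 0)"
    by (rule repl) (simp add: L_def)
  have 2: "pp k c ((x @ [B]) @ B # (y @ B # A # z)) + (if A = c then (Suc (Suc L))^k else 0)
      = pp k c ((x @ [B]) @ A # (y @ B # A # z)) + (if B = c then (Suc (Suc L))^k else 0)"
    by (rule repl) (simp add: L_def)
  have 3: "pp k c ((x @ B # A # y) @ B # (A # z)) + (if A = c then (Suc (L+M+2))^k else 0)
      = pp k c ((x @ B # A # y) @ A # (A # z)) + (if B = c then (Suc (L+M+2))^k else 0)"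
    by (rule repl) (simp add: L_def M_def)
  have 4: "pp k c ((x @ B # A # y @ [A]) @ A # z) + (if B = c then (Suc (L+M+3))^k else 0)
      = pp k c ((x @ B # A # y @ [A]) @ B # z) + (if A = c then (Suc (L+M+3))^k else 0)"
    by (rule repl) (simp add: L_def M_def)
  note 2 3 4
  then have 2: "pp k c (x @ B # B # y @ B # A # z) + (if A = c then (Suc (Suc L))^k else 0)
      = pp k c (x @ B # A # y @ B # A # z) + (if B = c then (Suc (Suc L))^k else 0)"
   and 3: "pp k c (x @ B # A # y @ B # A # z) + (if A = c then (Suc (L+M+2))^k else 0)
      = pp k c (x @ B # A # y @ A # A # z) + (if B = c then (Suc (L+M+2))^k else 0)"
   and 4: "pp k c (x @ B # A # y @ A # A # z) + (if B = c then (Suc (L+M+3))^k else 0)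
      = pp k c (x @ B # A # y @ A # B # z) + (if A = c then (Suc (L+M+3))^k else 0)"
    by (simp_all only: append_assoc append_Cons append_Nil)
  show ?thesis using 1 2 3 4 by (simp only: append_Cons append_Nil)
qed

lemma swap_pp:
  "pp 0 c (x@[A,B]@y@[B,A]@z) = pp 0 c (x@[B,A]@y@[A,B]@z)"
  "pp 1 c (x@[A,B]@y@[B,A]@z) = pp 1 c (x@[B,A]@y@[A,B]@z)"
  using chain[of 0 c x y z] chain[of 1 c x y z] by (cases c; simp)+

lemma swap_pp2:
  "pp 2 B (x@[A,B]@y@[B,A]@z) < pp 2 B (x@[B,A]@y@[A,B]@z)"
proof -
  define L where "L = length x"
  define M where "M = length y"
  have e: "pp 2 B (x@[A,B]@y@[B,A]@z) + ((Suc L)^2 + (Suc (L+M+3))^2)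
     = pp 2 B (x@[B,A]@y@[A,B]@z) + ((Suc (Suc L))^2 + (Suc (L+M+2))^2)"
    using chain[of 2 B x y z] unfolding L_def M_def by simp
  have "(Suc (Suc L))^2 + (Suc (L+M+2))^2 < (Suc L)^2 + (Suc (L+M+3))^2" by (simp add: power2_eq_square algebra_simps)
  then show ?thesis using e by linarith
qed

definition noBA where "noBA w \<longleftrightarrow> \<not>(\<exists>x z. w = x @ [B,A] @ z)"

lemma L1: "noBA w \<Longrightarrow> \<exists>a b. w = replicate a A @ replicate b B"
proof (induction w)
  case Nil have "[] = replicate 0 A @ replicate 0 B" "[] = replicate 0 B @ replicate 0 A" by simp_all
  then show ?case by blast
next
  case (Cons c w)
  have "noBA w"
  proof (unfold noBA_def, rule notI)
    assume "\<exists>x z. w = x @ [B, A] @ z"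
    then obtain x z where "w = x @ [B,A] @ z" by blast
    then have "c # w = (c # x) @ [B,A] @ z" by simp
    then show False using Cons.prems unfolding noBA_def by blast
  qed
  then obtain a b where w: "w = replicate a A @ replicate b B" using Cons.IH by blast
  show ?case
  proof (cases c)
    case A then show ?thesis using w by (intro exI[of _ "Suc a"] exI[of _ b]) simp
  next
    case B
    show ?thesis
    proof (cases a)
      case 0 then show ?thesis using w B by (intro exI[of _ 0] exI[of _ "Suc b"]) simp
    next
      case (Suc a')
      then have "c # w = [] @ [B,A] @ (replicate a' A @ replicate b B)" using w B by simp
      then show ?thesis using Cons.prems unfolding noBA_def by blast
    qed
  qed
qed

lemma L2: "\<not>(\<exists>x z. w = x @ [A,B] @ z) \<Longrightarrow> \<exists>c d. w = replicate c B @ replicate d A"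
proof (induction w)
  case Nil have "[] = replicate 0 A @ replicate 0 B" "[] = replicate 0 B @ replicate 0 A" by simp_all
  then show ?case by blast
next
  case (Cons e w)
  have "\<not>(\<exists>x z. w = x @ [A,B] @ z)"
  proof (rule notI)
    assume "\<exists>x z. w = x @ [A,B] @ z"
    then obtain x z where "w = x @ [A,B] @ z" by blast
    then have "e # w = (e # x) @ [A,B] @ z" by simp
    then show False using Cons.prems by blast
  qed
  then obtain a b where w: "w = replicate a B @ replicate b A" using Cons.IH by blast
  show ?case
  proof (cases e)
    case B then show ?thesis using w by (intro exI[of _ "Suc a"] exI[of _ b]) simp
  next
    case A
    show ?thesis
    proof (cases a)
      case 0 then show ?thesis using w A by (intro exI[of _ 0] exI[of _ "Suc b"]) simp
    next
      case (Suc a')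
      then have "e # w = [] @ [A,B] @ (replicate a' B @ replicate b A)" using w A by simp
      then show ?thesis using Cons.prems by blast
    qed
  qed
qed

lemma noBA_Nil: "noBA []" unfolding noBA_def by simp

lemma L3: "\<not> noBA w \<Longrightarrow> \<exists>x z. w = x @ [B,A] @ z \<and> noBA x"
proof (induction w)
  case Nil then show ?case unfolding noBA_def by simp
next
  case (Cons c w)
  show ?case
  proof (cases "\<exists>r. c # w = B # A # r")
    case True
    then obtain r where "c # w = [] @ [B,A] @ r" by auto
    then show ?thesis using noBA_Nil by blast
  next
    case False
    obtain x z where xz: "c # w = x @ [B,A] @ z" using Cons.prems unfolding noBA_def by blast
    have "x \<noteq> []" using xz False by auto
    then obtain x' where "x = c # x'" "w = x' @ [B,A] @ z" using xz by (cases x) auto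
    then have "\<not> noBA w" unfolding noBA_def by blast
    then obtain x'' z' where w: "w = x'' @ [B,A] @ z'" and nx: "noBA x''" using Cons.IH by blast
    have "noBA (c # x'')"
    proof (unfold noBA_def, rule notI)
      assume "\<exists>u v. c # x'' = u @ [B, A] @ v"
      then obtain u v where uv: "c # x'' = u @ [B, A] @ v" by blast
      show False
      proof (cases u)
        case Nil
        then show False using uv w False by auto
      next
        case (Cons c' u')
        then have "x'' = u' @ [B,A] @ v" using uv by simp
        then show False using nx unfolding noBA_def by blast
      qed
    qed
    moreover have "c # w = (c # x'') @ [B,A] @ z'" using w by simp
    ultimately show ?thesis by blast
  qed
qed

lemma struct_lem:
  assumes "\<not>(\<exists>x y z. w = x @ [B,A] @ y @ [A,B] @ z)"
  shows "(\<exists>a b. w = replicate a A @ replicate b B) \<or>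
         (\<exists>a b c d. b \<ge> 1 \<and> w = replicate a A @ replicate b B @ [A] @ replicate c B @ replicate d A)"
proof (cases "noBA w")
  case True then show ?thesis using L1 by blast
next
  case False
  then obtain x r where w: "w = x @ [B,A] @ r" and nx: "noBA x" using L3 by blast
  obtain a b where x: "x = replicate a A @ replicate b B" using L1 nx by blast
  have "\<not>(\<exists>y z. r = y @ [A,B] @ z)" using assms w by blast
  then obtain c d where r: "r = replicate c B @ replicate d A" using L2 by blast
  have "w = replicate a A @ replicate (Suc b) B @ [A] @ replicate c B @ replicate d A"
    using w x r by (simp add: replicate_app_Cons_same)
  moreover have "1 \<le> Suc b" by simp
  ultimately show ?thesis by blast
qed


lemma case1:
  assumes "k > 0" "w = replicate a A @ replicate b B" "length w = 4*k" "regular 1 w"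
  shows False
proof -
  have e0: "pp 0 A w = pp 0 B w" and e1: "pp 1 A w = pp 1 B w" using assms(4) reg_iff by auto
  have ab: "a = b" using e0 assms(2) by (simp add: pp0_app)
  have "pp (Suc 0) A (replicate a A) = pp (Suc 0) B (replicate b B) + a * b"
    using e1 assms(2) by (simp add: pp1_app')
  moreover have "2 * pp 1 A (replicate a A) = a*(a+1)" "2 * pp 1 B (replicate b B) = b*(b+1)"
    using pp1_rep_same by auto
  ultimately have "a * b = 0" using ab by simp
  then have "a = 0" using ab by simp
  then show False using assms ab by simp
qed

lemma case2:
  assumes "k > 0" "b \<ge> 1" "w = replicate a A @ replicate b B @ [A] @ replicate c B @ replicate d A"
    "length w = 4*k" "regular 1 w"
  shows "w = replicate k A @ replicate (2*k) B @ replicate k A"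
proof -
  have e0: "pp 0 A w = pp 0 B w" and e1: "pp 1 A w = pp 1 B w" using assms(5) reg_iff by auto
  have c0: "a + 1 + d = b + c" using e0 assms(3) by (simp add: pp0_app)
  have len: "a + b + 1 + c + d = 4*k" using assms(3,4) by simp
  define PA where "PA = pp 1 A (replicate a A)"
  define PB where "PB = pp 1 B (replicate b B)"
  define PC where "PC = pp 1 B (replicate c B)"
  define PD where "PD = pp 1 A (replicate d A)"
  have hA: "2*PA = a*(a+1)" and hB: "2*PB = b*(b+1)" and hC: "2*PC = c*(c+1)" and hD: "2*PD = d*(d+1)"
    unfolding PA_def PB_def PC_def PD_def using pp1_rep_same by auto
  have E: "PA + (a+b+1) + PD + (a+b+1+c)*d = PB + a*b + PC + (a+b+1)*c"
    using e1 assms(3) unfolding PA_def PB_def PC_def PD_def by (simp add: pp1_app' pp0_app algebra_simps)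
  have Ei: "2*int PA + 2*(int a+int b+1) + 2*int PD + 2*(int a+int b+1+int c)*int d
      = 2*int PB + 2*int a*int b + 2*int PC + 2*(int a+int b+1)*int c"
    using arg_cong[OF E, of "\<lambda>x. 2 * int x"] by (simp add: algebra_simps)
  have hAi: "2*int PA = int a*(int a+1)" using arg_cong[OF hA, of int] by (simp add: algebra_simps)
  have hBi: "2*int PB = int b*(int b+1)" using arg_cong[OF hB, of int] by (simp add: algebra_simps)
  have hCi: "2*int PC = int c*(int c+1)" using arg_cong[OF hC, of int] by (simp add: algebra_simps)
  have hDi: "2*int PD = int d*(int d+1)" using arg_cong[OF hD, of int] by (simp add: algebra_simps)
  have di: "int d = 2*int k - 1 - int a" using c0 len by linarith
  have bi: "int b = 2*int k - int c" using c0 len by linarith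
  have "int a*(int a+1) + 2*(int a+int b+1) + int d*(int d+1) + 2*(int a+int b+1+int c)*int d
      = int b*(int b+1) + 2*int a*int b + int c*(int c+1) + 2*(int a+int b+1)*int c"
    using Ei hAi hBi hCi hDi by linarith
  then have "4 * int c = 8 * int k * (int k - int a)" unfolding di bi by algebra
  then have cc: "int c = 2 * int k * (int k - int a)" by linarith
  have cb: "int c \<le> 2 * int k - 1" using bi assms(2) by linarith
  have ak: "a = k"
  proof (rule ccontr)
    assume "a \<noteq> k"
    then consider "a < k" | "a > k" by linarith
    then show False
    proof cases
      case 1
      then have "int k - int a \<ge> 1" by linarith
      then have "2 * int k * (int k - int a) \<ge> 2 * int k * 1"
        by (intro mult_left_mono) auto
      then show False using cc cb by linarith
    next
      case 2
      then have "int k - int a < 0" by linarith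
      then have "2 * int k * (int k - int a) < 0"
        using assms(1) by (simp add: mult_pos_neg)
      then show False using cc by linarith
    qed
  qed
  then have "c = 0" using cc by simp
  then have "b = 2*k" "d = k - 1" using bi di ak assms(1) by linarith+
  moreover have "[A] @ replicate (k-1) A = replicate k A"
    using assms(1) by (cases k) auto
  ultimately show ?thesis using assms(3) ak \<open>c = 0\<close> by simp
qed

lemma no_pattern_start:
  assumes "k > 0" "length w = 4*k" "regular 1 w" "w \<noteq> replicate k A @ replicate (2*k) B @ replicate k A"
  shows "\<exists>x y z. w = x @ [B,A] @ y @ [A,B] @ z"
  using struct_lem[of w] case1[OF assms(1) _ assms(2,3)] case2[OF assms(1) _ _ assms(2,3)] assms(4)
  by blast


lemma tot0: "pp 0 A w + pp 0 B w = length w"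
proof (induction w rule: rev_induct)
  case (snoc d w) then show ?case by (cases d) (simp_all add: pp_snoc)
qed simp

lemma tot1: "2 * (pp 1 A w + pp 1 B w) = length w * (length w + 1)"
proof (induction w rule: rev_induct)
  case (snoc d w) then show ?case by (cases d) (simp_all add: pp_snoc algebra_simps)
qed simp

lemma reg_len:
  assumes "regular 1 w" "length w \<ge> 1"
  shows "\<exists>k>0. length w = 4*k"
proof -
  have e0: "pp 0 A w = pp 0 B w" and e1: "pp 1 A w = pp 1 B w" using assms(1) reg_iff by auto
  define m where "m = pp 0 A w"
  define p where "p = pp 1 A w"
  have n: "length w = 2*m" using tot0[of w] e0 m_def by simp
  have "2*(2*p) = 2*m*(2*m+1)" using tot1[of w] e1 p_def n by simp
  then have "2*p = m*(2*m+1)" by simp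
  then have "even (m*(2*m+1))" by presburger
  then have "even m" by simp
  then obtain k where "m = 2*k" by blast
  then show ?thesis using n assms(2) by auto
qed

lemma start_reg:
  "regular 1 (replicate k A @ replicate (2*k) B @ replicate k A)"
proof -
  define PA where "PA = pp 1 A (replicate k A)"
  define PB where "PB = pp 1 B (replicate (2*k) B)"
  have hA: "2*PA = k*(k+1)" and hB: "2*PB = (2*k)*(2*k+1)"
    unfolding PA_def PB_def using pp1_rep_same by auto
  have "pp 1 A (replicate k A @ replicate (2*k) B @ replicate k A) = PA + PA + 3*k*k"
    unfolding PA_def by (simp add: pp1_app' pp0_app algebra_simps)
  moreover have "pp 1 B (replicate k A @ replicate (2*k) B @ replicate k A) = PB + k*(2*k)"
    unfolding PB_def by (simp add: pp1_app' pp0_app algebra_simps)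
  moreover have "PA + PA + 3*k*k = PB + k*(2*k)" using hA hB by (simp add: algebra_simps)
  moreover have "pp 0 A (replicate k A @ replicate (2*k) B @ replicate k A) = 2*k"
    by (simp only: pp0_app pp0_rep) simp
  moreover have "pp 0 B (replicate k A @ replicate (2*k) B @ replicate k A) = 2*k"
    by (simp only: pp0_app pp0_rep) simp
  ultimately show ?thesis unfolding reg_iff by simp
qed

lemma reach:
  assumes "k > 0"
  shows "length w = 4*k \<Longrightarrow> regular 1 w \<Longrightarrow>
    regular_swap_step\<^sup>*\<^sup>* (replicate k A @ replicate (2*k) B @ replicate k A) w"
proof (induction w rule: measure_induct_rule[of "\<lambda>w. pp 2 B w"])
  case (less w)
  show ?case
  proof (cases "w = replicate k A @ replicate (2*k) B @ replicate k A")
    case True then show ?thesis by simp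
  next
    case False
    then obtain x y z where w: "w = x @ [B,A] @ y @ [A,B] @ z"
      using no_pattern_start[OF assms less.prems] by blast
    define w' where "w' = x @ [A,B] @ y @ [B,A] @ z"
    have "regular 1 w'" using less.prems(2) unfolding reg_iff w w'_def by (simp only: swap_pp)
    moreover have "length w' = 4*k" using less.prems(1) w w'_def by simp
    moreover have "pp 2 B w' < pp 2 B w" unfolding w w'_def by (rule swap_pp2)
    ultimately have r: "regular_swap_step\<^sup>*\<^sup>* (replicate k A @ replicate (2*k) B @ replicate k A) w'"
      using less.IH by blast
    have "regular_swap_step w' w"
      unfolding regular_swap_step_def swap_step_def using \<open>regular 1 w'\<close> less.prems(2) w w'_def by blast
    then show ?thesis using r by (rule rtranclp.rtrancl_into_rtrancl[rotated])
  qed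
qed

theorem mainTheorem7:
  shows "(\<forall>n::nat. n \<ge> 1 \<longrightarrow>
            ((\<exists>w. length w = n \<and> regular 1 w) \<longleftrightarrow> (\<exists>k::nat. k > 0 \<and> n = 4 * k)))
       \<and> (\<forall>k::nat. k > 0 \<longrightarrow> (\<forall>w. length w = 4 * k \<and> regular 1 w \<longrightarrow>
            regular_swap_step\<^sup>*\<^sup>*
              (replicate k A @ replicate (2 * k) B @ replicate k A) w))"
proof (intro conjI allI impI)
  fix n :: nat assume "n \<ge> 1"
  show "(\<exists>w. length w = n \<and> regular 1 w) \<longleftrightarrow> (\<exists>k::nat. k > 0 \<and> n = 4 * k)"
  proof
    assume "\<exists>w. length w = n \<and> regular 1 w"
    then show "\<exists>k::nat. k > 0 \<and> n = 4 * k" using reg_len \<open>n \<ge> 1\<close> by blast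
  next
    assume "\<exists>k::nat. k > 0 \<and> n = 4 * k"
    then obtain k where "n = 4*k" by blast
    moreover have "length (replicate k A @ replicate (2*k) B @ replicate k A) = 4*k" by simp
    ultimately show "\<exists>w. length w = n \<and> regular 1 w" using start_reg by blast
  qed
next
  fix k :: nat and w assume "k > 0" "length w = 4 * k \<and> regular 1 w"
  then show "regular_swap_step\<^sup>*\<^sup>* (replicate k A @ replicate (2 * k) B @ replicate k A) w"
    using reach by blast
qed

end
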